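(* Let $0<S<T$, let $\tilde\beta:[0,T]\to\mathbb{R}^d$, $\tilde B:[0,T]\to\mathbb{R}^{d\times d}$, $\tilde\sigma:[0,T]\to\mathbb{R}^{d\times d'}$ be continuous, $\tilde a=\tilde\sigma\tilde\sigma'$, $L_S\in\mathbb{R}^{m_S\times d}$, $L_T\in\mathbb{R}^{m_T\times d}$, and let $\Sigma_S,\Sigma_T$ be symmetric positive definite matrices of sizes $m_S$, $m_T$. With $\tilde L$, $\mu$, $\Upsilon$ as in the context, define $\tilde M^\dagger(t)=\int_t^T\tilde L(\tau)\tilde a(\tau)\tilde L(\tau)'\,\mathrm d\tau+\Upsilon(t)$. Then for $t\in(S,T]$, $$\frac{\mathrm d\tilde L(t)}{\mathrm dt}=-\tilde L(t)\tilde B(t),\ \tilde L(T)=L_T;\qquad \frac{\mathrm d\tilde M^\dagger(t)}{\mathrm dt}=-\tilde L(t)\tilde a(t)\tilde L(t)',\ \tilde M^\dagger(T)=\Sigma_T;\qquad \frac{\mathrm d\mu(t)}{\mathrm dt}=-\tilde L(t)\tilde\beta(t),\ \mu(T)=0.$$ For $t\in[0,S]$ the same three differential equations hold, and the values at $S$ are related to the right limits at $S$ by $$\tilde L(S)=\begin{bmatrix}L_S\\ \tilde L(S+)\end{bmatrix},\qquad \tilde M^\dagger(S)=\begin{bmatrix}\Sigma_S&0_{m_S\times m_T}\\ 0_{m_T\times m_S}&\tilde M^\dagger(S+)\end{bmatrix},\qquad \mu(S)=\begin{bmatrix}0_{m_S}\\ \mu(S+)\end{bmatrix}.$$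
   Context: Let $\Phi$ solve $\mathrm d\Phi(t)=\tilde B(t)\Phi(t)\,\mathrm dt$, $\Phi(0)=I$, and $\Phi(t,s)=\Phi(t)\Phi(s)^{-1}$. Define $\tilde L(t)=\begin{bmatrix}L_S\Phi(S,t)\mathbf 1_{[0,S]}(t)\\ L_T\Phi(T,t)\end{bmatrix}$ for $t\in[0,S]$ and $\tilde L(t)=L_T\Phi(T,t)$ for $t\in(S,T]$; $\Upsilon(t)=\operatorname{diag}(\Sigma_S,\Sigma_T)$ for $t\in[0,S]$ and $\Upsilon(t)=\Sigma_T$ for $t\in(S,T]$; $\mu(t)=\int_t^T\tilde L(\tau)\tilde\beta(\tau)\,\mathrm d\tau$. For $t\in[0,S]$, in the integrals defining $\mu(t)$ and $\tilde M^\dagger(t)$ the integrand $\tilde L(\tau)$ means the $(m_S+m_T)\times d$ matrix $\begin{bmatrix}L_S\Phi(S,\tau)\mathbf 1_{[0,S]}(\tau)\\ L_T\Phi(T,\tau)\end{bmatrix}$ for all $\tau\in[t,T]$. $f(S+)$ denotes the right limit $\lim_{t\downarrow S}f(t)$. *)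

theory Defs
  imports "HOL-Analysis.Analysis"
begin

definition vstack :: "'a::zero^'c^'m \<Rightarrow> 'a^'c^'n \<Rightarrow> 'a^'c^('m + 'n)" where
  "vstack A B = (\<chi> i. case i of Inl k \<Rightarrow> A $ k | Inr k \<Rightarrow> B $ k)"

definition vstack_vec :: "'a::zero^'m \<Rightarrow> 'a^'n \<Rightarrow> 'a^('m + 'n)" where
  "vstack_vec x y = (\<chi> i. case i of Inl k \<Rightarrow> x $ k | Inr k \<Rightarrow> y $ k)"

definition blockdiag :: "'a::zero^'m^'m \<Rightarrow> 'a^'n^'n \<Rightarrow> 'a^('m + 'n)^('m + 'n)" where
  "blockdiag A B = (\<chi> i j. case (i, j) of
       (Inl k, Inl l) \<Rightarrow> A $ k $ l
     | (Inr k, Inr l) \<Rightarrow> B $ k $ l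
     | _ \<Rightarrow> 0)"

definition sym_posdef :: "real^'n^'n \<Rightarrow> bool" where
  "sym_posdef A \<longleftrightarrow> transpose A = A \<and> (\<forall>x. x \<noteq> 0 \<longrightarrow> x \<bullet> (A *v x) > 0)"

definition trans_mat :: "(real \<Rightarrow> real^'d^'d) \<Rightarrow> real \<Rightarrow> real \<Rightarrow> real^'d^'d" where
  "trans_mat \<Phi> t s = \<Phi> t ** matrix_inv (\<Phi> s)"

text \<open>\<open>L~\<close> on \<open>(S,T]\<close> (and, as function of \<open>\<tau>\<close>, the integrand used there): \<open>L_T \<Phi>(T,t)\<close>.\<close>
definition Ltil_T :: "real^'d^'mT \<Rightarrow> (real \<Rightarrow> real^'d^'d) \<Rightarrow> real \<Rightarrow> real \<Rightarrow> real^'d^'mT" where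
  "Ltil_T LmT \<Phi> T t = LmT ** trans_mat \<Phi> T t"

definition Ltil_S :: "real^'d^'mS \<Rightarrow> real^'d^'mT \<Rightarrow> (real \<Rightarrow> real^'d^'d) \<Rightarrow> real \<Rightarrow> real \<Rightarrow> real
    \<Rightarrow> real^'d^('mS + 'mT)" where
  "Ltil_S LmS LmT \<Phi> S T t =
     vstack (indicator {0..S} t *\<^sub>R (LmS ** trans_mat \<Phi> S t)) (Ltil_T LmT \<Phi> T t)"

definition mu_T :: "real^'d^'mT \<Rightarrow> (real \<Rightarrow> real^'d^'d) \<Rightarrow> (real \<Rightarrow> real^'d) \<Rightarrow> real \<Rightarrow> real \<Rightarrow> real^'mT" where
  "mu_T LmT \<Phi> \<beta> T t = integral {t..T} (\<lambda>\<tau>. Ltil_T LmT \<Phi> T \<tau> *v \<beta> \<tau>)"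

definition mu_S :: "real^'d^'mS \<Rightarrow> real^'d^'mT \<Rightarrow> (real \<Rightarrow> real^'d^'d) \<Rightarrow> (real \<Rightarrow> real^'d)
    \<Rightarrow> real \<Rightarrow> real \<Rightarrow> real \<Rightarrow> real^('mS + 'mT)" where
  "mu_S LmS LmT \<Phi> \<beta> S T t = integral {t..T} (\<lambda>\<tau>. Ltil_S LmS LmT \<Phi> S T \<tau> *v \<beta> \<tau>)"

definition Mdag_T :: "real^'d^'mT \<Rightarrow> (real \<Rightarrow> real^'d^'d) \<Rightarrow> (real \<Rightarrow> real^'d^'d) \<Rightarrow> real^'mT^'mT
    \<Rightarrow> real \<Rightarrow> real \<Rightarrow> real^'mT^'mT" where
  "Mdag_T LmT \<Phi> a \<Sigma>T T t =
     integral {t..T} (\<lambda>\<tau>. Ltil_T LmT \<Phi> T \<tau> ** a \<tau> ** transpose (Ltil_T LmT \<Phi> T \<tau>)) + \<Sigma>T"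

definition Mdag_S :: "real^'d^'mS \<Rightarrow> real^'d^'mT \<Rightarrow> (real \<Rightarrow> real^'d^'d) \<Rightarrow> (real \<Rightarrow> real^'d^'d)
    \<Rightarrow> real^'mS^'mS \<Rightarrow> real^'mT^'mT \<Rightarrow> real \<Rightarrow> real \<Rightarrow> real \<Rightarrow> real^('mS + 'mT)^('mS + 'mT)" where
  "Mdag_S LmS LmT \<Phi> a \<Sigma>S \<Sigma>T S T t =
     integral {t..T} (\<lambda>\<tau>. Ltil_S LmS LmT \<Phi> S T \<tau> ** a \<tau> ** transpose (Ltil_S LmS LmT \<Phi> S T \<tau>))
     + blockdiag \<Sigma>S \<Sigma>T"

end

theory Submission
  imports Defs
begin


lemma bilinear_mm: "bilinear ((\<lambda>A B. A ** B) :: real^'n^'m \<Rightarrow> real^'p^'n \<Rightarrow> real^'p^'m)"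
  unfolding bilinear_def linear_iff
  by (auto simp: matrix_matrix_mult_def vec_eq_iff sum.distrib sum_distrib_left algebra_simps)

lemma bb_mm: "bounded_bilinear ((\<lambda>A B. A ** B) :: real^'n^'m \<Rightarrow> real^'p^'n \<Rightarrow> real^'p^'m)"
  using bilinear_mm bilinear_conv_bounded_bilinear by blast

lemma bilinear_mv: "bilinear ((\<lambda>A x. A *v x) :: real^'n^'m \<Rightarrow> real^'n \<Rightarrow> real^'m)"
  unfolding bilinear_def linear_iff
  by (auto simp: matrix_vector_mult_def vec_eq_iff sum.distrib sum_distrib_left algebra_simps)

lemma bb_mv: "bounded_bilinear ((\<lambda>A x. A *v x) :: real^'n^'m \<Rightarrow> real^'n \<Rightarrow> real^'m)"
  using bilinear_mv bilinear_conv_bounded_bilinear by blast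

lemma bl_transpose: "bounded_linear (transpose :: real^'n^'m \<Rightarrow> real^'m^'n)"
  unfolding linear_conv_bounded_linear[symmetric] linear_iff
  by (auto simp: transpose_def vec_eq_iff)

lemma bl_vstack1: "bounded_linear (\<lambda>A::real^'c^'m. vstack A (0::real^'c^'n))"
  unfolding linear_conv_bounded_linear[symmetric] linear_iff
  by (auto simp: vstack_def vec_eq_iff split: sum.splits)

lemma bl_vstack2: "bounded_linear (\<lambda>B::real^'c^'n. vstack (0::real^'c^'m) B)"
  unfolding linear_conv_bounded_linear[symmetric] linear_iff
  by (auto simp: vstack_def vec_eq_iff split: sum.splits)

lemma vstack_split: "vstack (A::real^'c^'m) (B::real^'c^'n) = vstack A 0 + vstack 0 B"
  by (auto simp: vstack_def vec_eq_iff split: sum.splits)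

lemma bl_vstack_vec2: "bounded_linear (\<lambda>y::real^'n. vstack_vec (0::real^'m) y)"
  unfolding linear_conv_bounded_linear[symmetric] linear_iff
  by (auto simp: vstack_vec_def vec_eq_iff split: sum.splits)

lemma bl_blockdiag2: "bounded_linear (\<lambda>B::real^'n^'n. blockdiag (0::real^'m^'m) B)"
  unfolding linear_conv_bounded_linear[symmetric] linear_iff
  by (auto simp: blockdiag_def vec_eq_iff split: sum.splits)

lemma vstack_mult: "vstack A C ** M = vstack (A ** M) (C ** M)"
  by (auto simp: vstack_def matrix_matrix_mult_def vec_eq_iff split: sum.splits)

lemma vstack_mv: "vstack A C *v x = vstack_vec (A *v x) (C *v x)"
  by (auto simp: vstack_def vstack_vec_def matrix_vector_mult_def vec_eq_iff split: sum.splits)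

lemma vstack_uminus: "- vstack A C = vstack (-A) (-C)"
  by (auto simp: vstack_def vec_eq_iff split: sum.splits)

lemma vstack0_blockdiag: "vstack 0 C ** M ** transpose (vstack 0 C) = blockdiag 0 (C ** M ** transpose C)"
  by (auto simp: vstack_def blockdiag_def transpose_def matrix_matrix_mult_def vec_eq_iff split: sum.splits)

lemma blockdiag_add: "blockdiag (A::real^'m^'m) (B::real^'n^'n) + blockdiag C D = blockdiag (A + C) (B + D)"
  by (auto simp: blockdiag_def vec_eq_iff split: sum.splits)

lemma mm_diff_r: "(A::real^'n^'m) ** (B - C) = A ** B - A ** C"
  by (simp add: matrix_matrix_mult_def vec_eq_iff sum_subtractf algebra_simps)
lemma mm_diff_l: "((A::real^'n^'m) - C) ** B = A ** B - C ** B"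
  by (simp add: matrix_matrix_mult_def vec_eq_iff sum_subtractf algebra_simps)
lemma mm_scaleR_r: "(A::real^'n^'m) ** (r *\<^sub>R B) = r *\<^sub>R (A ** B)"
  by (simp add: matrix_matrix_mult_def vec_eq_iff sum_distrib_left algebra_simps)
lemma mm_scaleR_l: "(r *\<^sub>R (A::real^'n^'m)) ** B = r *\<^sub>R (A ** B)"
  by (simp add: matrix_matrix_mult_def vec_eq_iff sum_distrib_left algebra_simps)
lemma mm_uminus_r: "(A::real^'n^'m) ** (- B) = - (A ** B)"
  by (simp add: matrix_matrix_mult_def vec_eq_iff sum_negf)
lemma mm_uminus_l: "(- (A::real^'n^'m)) ** B = - (A ** B)"
  by (simp add: matrix_matrix_mult_def vec_eq_iff sum_negf)

lemma hvd_iff: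
  fixes f :: "real \<Rightarrow> 'a::real_normed_vector"
  shows "(f has_vector_derivative f') (at x within S) \<longleftrightarrow> ((\<lambda>y. (1/(y-x)) *\<^sub>R (f y - f x)) \<longlongrightarrow> f') (at x within S)"
proof -
  have ev: "\<forall>\<^sub>F y in at x within S. norm ((1/(y-x)) *\<^sub>R (f y - f x) - f') = norm ((1 / norm (y - x)) *\<^sub>R (f y - (f x + (y - x) *\<^sub>R f')))"
  proof (rule eventually_at_filter[THEN iffD2], intro always_eventually allI impI)
    fix y assume "y \<noteq> x"
    have e: "(1/(y-x)) *\<^sub>R ((y - x) *\<^sub>R f') = f'" using \<open>y \<noteq> x\<close> by simp
    have "(1/(y-x)) *\<^sub>R (f y - (f x + (y - x) *\<^sub>R f')) = (1/(y-x)) *\<^sub>R (f y - f x) - (1/(y-x)) *\<^sub>R ((y - x) *\<^sub>R f')"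
      by (simp only: scaleR_diff_right diff_diff_eq[symmetric])
    then have "(1/(y-x)) *\<^sub>R (f y - f x) - f' = (1/(y-x)) *\<^sub>R (f y - (f x + (y - x) *\<^sub>R f'))"
      unfolding e by (rule sym)
    then show "norm ((1/(y-x)) *\<^sub>R (f y - f x) - f') = norm ((1 / norm (y - x)) *\<^sub>R (f y - (f x + (y - x) *\<^sub>R f')))"
      by simp
  qed
  have "((\<lambda>y. (1/(y-x)) *\<^sub>R (f y - f x)) \<longlongrightarrow> f') (at x within S) \<longleftrightarrow>
        ((\<lambda>y. (1/(y-x)) *\<^sub>R (f y - f x) - f') \<longlongrightarrow> 0) (at x within S)"
    by (simp add: Lim_null[symmetric])
  also have "\<dots> \<longleftrightarrow> ((\<lambda>y. norm ((1/(y-x)) *\<^sub>R (f y - f x) - f')) \<longlongrightarrow> 0) (at x within S)"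
    by (rule tendsto_norm_zero_iff[symmetric])
  also have "\<dots> \<longleftrightarrow> ((\<lambda>y. norm ((1 / norm (y - x)) *\<^sub>R (f y - (f x + (y - x) *\<^sub>R f')))) \<longlongrightarrow> 0) (at x within S)"
    by (rule tendsto_cong[OF ev])
  also have "\<dots> \<longleftrightarrow> ((\<lambda>y. (1 / norm (y - x)) *\<^sub>R (f y - (f x + (y - x) *\<^sub>R f'))) \<longlongrightarrow> 0) (at x within S)"
    by (rule tendsto_norm_zero_iff)
  finally show ?thesis
    unfolding has_vector_derivative_def has_derivative_within
    by (simp add: bounded_linear_scaleR_left)
qed



lemma mv_bound:
  fixes B :: "real \<Rightarrow> real^'d^'d"
  assumes "continuous_on {0..T} B" "0 \<le> T"
  obtains K where "K \<ge> 0" "\<And>t v. t \<in> {0..T} \<Longrightarrow> norm (B t *v v) \<le> K * norm v"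
proof -
  let ?f = "\<lambda>t. (\<Sum>i\<in>UNIV. \<Sum>j\<in>UNIV. \<bar>B t $ i $ j\<bar>)"
  have c: "continuous_on {0..T} ?f"
    by (intro continuous_intros assms(1))
  obtain t0 where t0: "t0 \<in> {0..T}" "\<And>t. t \<in> {0..T} \<Longrightarrow> ?f t \<le> ?f t0"
    using continuous_attains_sup[OF compact_Icc _ c] assms(2) by fastforce
  show ?thesis
  proof (rule that[of "max 0 (?f t0)"])
    fix t v assume t: "t \<in> {0..T}"
    have "norm (B t *v v) \<le> onorm ((*v) (B t)) * norm v"
      by (rule onorm) simp
    also have "\<dots> \<le> ?f t * norm v"
      by (intro mult_right_mono onorm_le_matrix_component_sum) auto
    also have "\<dots> \<le> max 0 (?f t0) * norm v"
      using t0(2)[OF t] by (intro mult_right_mono) auto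
    finally show "norm (B t *v v) \<le> max 0 (?f t0) * norm v" .
  qed auto
qed

lemma phi_lower:
  fixes \<Phi> B :: "real \<Rightarrow> real^'d^'d"
  assumes contB: "continuous_on {0..T} B"
    and ode: "\<And>t. t \<in> {0..T} \<Longrightarrow> (\<Phi> has_vector_derivative (B t ** \<Phi> t)) (at t within {0..T})"
    and phi0: "\<Phi> 0 = mat 1" and T: "0 \<le> T"
  shows "\<exists>c>0. \<forall>t\<in>{0..T}. \<forall>x. c * norm x \<le> norm (\<Phi> t *v x)"
proof -
  obtain K where K: "K \<ge> 0" "\<And>t v. t \<in> {0..T} \<Longrightarrow> norm (B t *v v) \<le> K * norm v"
    using mv_bound[OF contB T] by blast
  have main: "exp (- K * T) * norm x \<le> norm (\<Phi> t *v x)" if t: "t \<in> {0..T}" for t x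
  proof -
    define y where "y s = \<Phi> s *v x" for s
    have dy: "(y has_vector_derivative (B s *v y s)) (at s within {0..T})" if "s \<in> {0..T}" for s
    proof -
      have "((\<lambda>s. \<Phi> s *v x) has_vector_derivative ((B s ** \<Phi> s) *v x)) (at s within {0..T})"
        using bounded_linear.has_vector_derivative[OF bounded_bilinear.bounded_linear_left[OF bb_mv] ode[OF that]]
        by simp
      then show ?thesis unfolding y_def[abs_def] by (simp add: matrix_vector_mul_assoc)
    qed
    define g where "g s = exp (2*K * s) * (y s \<bullet> y s)" for s
    define g' where "g' s = exp (2*K * s) * (2*K*(y s \<bullet> y s)) + exp (2*K * s) * (2 * (y s \<bullet> (B s *v y s)))" for s
    have dg: "(g has_field_derivative g' s) (at s within {0..T})" if "s \<in> {0..T}" for s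
    proof -
      have i: "((\<lambda>s. y s \<bullet> y s) has_vector_derivative (y s \<bullet> (B s *v y s) + (B s *v y s) \<bullet> y s)) (at s within {0..T})"
        using bounded_bilinear.has_vector_derivative[OF bounded_bilinear_inner dy[OF that] dy[OF that]] .
      have i2: "((\<lambda>s. y s \<bullet> y s) has_field_derivative (2 * (y s \<bullet> (B s *v y s)))) (at s within {0..T})"
        using i by (simp add: has_real_derivative_iff_has_vector_derivative inner_commute)
      have e: "((\<lambda>s. exp (2*K * s)) has_field_derivative exp (2*K * s) * (2*K)) (at s within {0..T})"
        by (auto intro!: derivative_eq_intros)
      show ?thesis
        unfolding g_def g'_def
        using DERIV_mult[OF e i2] by (simp add: algebra_simps)
    qed
    have g'nn: "g' s \<ge> 0" if "s \<in> {0..T}" for s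
    proof -
      have "\<bar>y s \<bullet> (B s *v y s)\<bar> \<le> norm (y s) * norm (B s *v y s)"
        by (rule Cauchy_Schwarz_ineq2)
      also have "\<dots> \<le> norm (y s) * (K * norm (y s))"
        using K(2)[OF that] by (intro mult_left_mono) auto
      also have "\<dots> = K * (y s \<bullet> y s)"
        by (simp add: power2_norm_eq_inner[symmetric] power2_eq_square)
      finally have "0 \<le> 2*K*(y s \<bullet> y s) + 2 * (y s \<bullet> (B s *v y s))" by linarith
      then have "0 \<le> exp (2*K * s) * (2*K*(y s \<bullet> y s) + 2 * (y s \<bullet> (B s *v y s)))" by simp
      then show ?thesis unfolding g'_def by (simp add: algebra_simps)
    qed
    have "\<exists>\<xi>\<in>{0..t}. g t - g 0 = g' \<xi> * (t - 0)"
    proof (rule mvt_very_simple[where f'="\<lambda>\<xi> h. g' \<xi> * h", simplified])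
      show "0 \<le> t" using t by simp
      fix \<xi> assume "0 \<le> \<xi>" "\<xi> \<le> t"
      then have xi: "\<xi> \<in> {0..T}" using t by auto
      have "(g has_field_derivative g' \<xi>) (at \<xi> within {0..t})"
        by (rule DERIV_subset[OF dg[OF xi]]) (use t in auto)
      then show "(g has_derivative (\<lambda>h. g' \<xi> * h)) (at \<xi> within {0..t})"
        unfolding has_field_derivative_def by (rule has_derivative_eq_rhs) (auto simp: fun_eq_iff)
    qed
    then obtain \<xi> where "\<xi> \<in> {0..t}" "g t - g 0 = g' \<xi> * t" by auto
    moreover have "\<xi> \<in> {0..T}" using \<open>\<xi> \<in> {0..t}\<close> t by auto
    ultimately have "g 0 \<le> g t" using g'nn t by (metis atLeastAtMost_iff diff_ge_0_iff_ge mult_nonneg_nonneg)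
    then have 1: "x \<bullet> x \<le> exp (2*K*t) * (y t \<bullet> y t)"
      by (simp add: g_def y_def phi0)
    have "exp (-K*T) ^ 2 * (x \<bullet> x) \<le> exp (-K*t) ^ 2 * (x \<bullet> x)"
      using K(1) t by (intro mult_right_mono power_mono) (auto intro!: mult_left_mono)
    also have "exp (-K*t) ^ 2 * (x \<bullet> x) \<le> exp (-K*t) ^ 2 * (exp (2*K*t) * (y t \<bullet> y t))"
      using 1 by (intro mult_left_mono) auto
    also have "\<dots> = y t \<bullet> y t"
      by (simp add: exp_double[symmetric] mult.assoc[symmetric] exp_add[symmetric])
    finally have "(exp (-K*T) * norm x)^2 \<le> (norm (y t))^2"
      by (simp add: power2_norm_eq_inner power_mult_distrib)
    then show ?thesis unfolding y_def
      by (rule power2_le_imp_le) simp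
  qed
  show ?thesis
    by (rule exI[of _ "exp (- K * T)"]) (use main in auto)
qed

lemma lower_invertible:
  fixes A :: "real^'d^'d"
  assumes "c > 0" "\<And>x. c * norm x \<le> norm (A *v x)"
  shows "invertible A" "A ** matrix_inv A = mat 1" "matrix_inv A ** A = mat 1"
    "\<And>z. c * norm (matrix_inv A *v z) \<le> norm z"
proof -
  have "\<forall>x. A *v x = 0 \<longrightarrow> x = 0"
    using assms by (metis mult_le_0_iff norm_eq_zero norm_ge_zero norm_zero not_less order_antisym)
  then show inv: "invertible A"
    using matrix_left_invertible_ker invertible_left_inverse by blast
  then have "\<exists>A'. A ** A' = mat 1 \<and> A' ** A = mat 1" by (simp add: invertible_def)
  then have "A ** matrix_inv A = mat 1 \<and> matrix_inv A ** A = mat 1"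
    unfolding matrix_inv_def by (rule someI_ex)
  then show r: "A ** matrix_inv A = mat 1" and "matrix_inv A ** A = mat 1" by auto
  fix z
  show "c * norm (matrix_inv A *v z) \<le> norm z"
    using assms(2)[of "matrix_inv A *v z"] by (simp add: matrix_vector_mul_assoc r)
qed



locale phictx =
  fixes \<Phi> B :: "real \<Rightarrow> real^'d^'d" and T c :: real
  assumes ode: "\<And>t. t \<in> {0..T} \<Longrightarrow> (\<Phi> has_vector_derivative (B t ** \<Phi> t)) (at t within {0..T})"
    and cpos: "c > 0"
    and low: "\<And>t x. t \<in> {0..T} \<Longrightarrow> c * norm x \<le> norm (\<Phi> t *v x)"
begin

definition "\<Psi> t = matrix_inv (\<Phi> t)"

lemma psi_r: "t \<in> {0..T} \<Longrightarrow> \<Phi> t ** \<Psi> t = mat 1"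
  and psi_l: "t \<in> {0..T} \<Longrightarrow> \<Psi> t ** \<Phi> t = mat 1"
  and psi_b: "t \<in> {0..T} \<Longrightarrow> c * norm (\<Psi> t *v z) \<le> norm z"
  using lower_invertible[OF cpos low] unfolding \<Psi>_def by auto

lemma phi_tendsto: "t \<in> {0..T} \<Longrightarrow> (\<Phi> \<longlongrightarrow> \<Phi> t) (at t within {0..T})"
  using has_vector_derivative_continuous[OF ode] by (simp add: continuous_within)

lemma psi_vec_tendsto:
  assumes t: "t \<in> {0..T}"
  shows "((\<lambda>s. \<Psi> s *v z) \<longlongrightarrow> \<Psi> t *v z) (at t within {0..T})"
proof -
  define w where "w = \<Psi> t *v z"
  have pw: "((\<lambda>s. \<Phi> s *v w) \<longlongrightarrow> \<Phi> t *v w) (at t within {0..T})"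
    using bounded_linear.tendsto[OF bounded_bilinear.bounded_linear_left[OF bb_mv] phi_tendsto[OF t]] by simp
  have g: "((\<lambda>s. (1/c) * norm (\<Phi> t *v w - \<Phi> s *v w)) \<longlongrightarrow> 0) (at t within {0..T})"
  proof -
    have "((\<lambda>s. \<Phi> t *v w - \<Phi> s *v w) \<longlongrightarrow> 0) (at t within {0..T})"
      using tendsto_diff[OF tendsto_const[of "\<Phi> t *v w"] pw] by simp
    then have "((\<lambda>s. norm (\<Phi> t *v w - \<Phi> s *v w)) \<longlongrightarrow> 0) (at t within {0..T})"
      using tendsto_norm_zero by blast
    then show ?thesis using tendsto_mult_right_zero by blast
  qed
  have ev0: "\<forall>\<^sub>F s in at t within {0..T}. norm (\<Psi> s *v z - \<Psi> t *v z) \<le> (1/c) * norm (\<Phi> t *v w - \<Phi> s *v w)"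
  proof (rule eventually_at_filter[THEN iffD2], intro always_eventually allI impI)
    fix s assume s: "s \<in> {0..T}"
    have z: "z = \<Phi> t *v w" unfolding w_def using psi_r[OF t] by (simp add: matrix_vector_mul_assoc)
    have h: "\<Psi> s *v (\<Phi> s *v w) = w" using psi_l[OF s] by (simp add: matrix_vector_mul_assoc)
    have "\<Psi> s *v (\<Phi> t *v w - \<Phi> s *v w) = \<Psi> s *v z - w"
      using h z[symmetric] by (simp add: matrix_vector_mult_diff_distrib)
    then have "\<Psi> s *v z - \<Psi> t *v z = \<Psi> s *v (\<Phi> t *v w - \<Phi> s *v w)"
      by (simp add: w_def)
    then have "c * norm (\<Psi> s *v z - \<Psi> t *v z) \<le> norm (\<Phi> t *v w - \<Phi> s *v w)"
      using psi_b[OF s] by simp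
    then show "norm (\<Psi> s *v z - \<Psi> t *v z) \<le> (1/c) * norm (\<Phi> t *v w - \<Phi> s *v w)"
      using cpos by (simp add: field_simps)
  qed
  have "((\<lambda>s. \<Psi> s *v z - \<Psi> t *v z) \<longlongrightarrow> 0) (at t within {0..T})"
    by (rule Lim_null_comparison[OF ev0 g])
  then show ?thesis by (simp add: Lim_null[symmetric])
qed

lemma psi_tendsto:
  assumes t: "t \<in> {0..T}"
  shows "(\<Psi> \<longlongrightarrow> \<Psi> t) (at t within {0..T})"
proof (rule vec_tendstoI, rule vec_tendstoI)
  fix i j
  have "((\<lambda>s. (\<Psi> s *v axis j 1) $ i) \<longlongrightarrow> (\<Psi> t *v axis j 1) $ i) (at t within {0..T})"
    by (intro tendsto_vec_nth psi_vec_tendsto t)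
  moreover have "\<And>M::real^'d^'d. (M *v axis j 1) $ i = M $ i $ j"
    by (simp add: matrix_vector_mult_def axis_def if_distrib cong: if_cong)
  ultimately show "((\<lambda>s. \<Psi> s $ i $ j) \<longlongrightarrow> \<Psi> t $ i $ j) (at t within {0..T})" by simp
qed

lemma psi_deriv:
  assumes t: "t \<in> {0..T}"
  shows "(\<Psi> has_vector_derivative - (\<Psi> t ** B t)) (at t within {0..T})"
  unfolding hvd_iff
proof -
  have q: "((\<lambda>s. (1/(s-t)) *\<^sub>R (\<Phi> s - \<Phi> t)) \<longlongrightarrow> B t ** \<Phi> t) (at t within {0..T})"
    using ode[OF t] unfolding hvd_iff .
  have l: "((\<lambda>s. - (\<Psi> s ** ((1/(s-t)) *\<^sub>R (\<Phi> s - \<Phi> t)) ** \<Psi> t)) \<longlongrightarrow> - (\<Psi> t ** (B t ** \<Phi> t) ** \<Psi> t)) (at t within {0..T})"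
    by (intro tendsto_minus bounded_bilinear.tendsto[OF bb_mm] psi_tendsto t q tendsto_const)
  have e1: "\<Psi> t ** (B t ** \<Phi> t) ** \<Psi> t = \<Psi> t ** B t"
    using psi_r[OF t] by (simp add: matrix_mul_assoc[symmetric])
  have ev: "\<forall>\<^sub>F s in at t within {0..T}. - (\<Psi> s ** ((1/(s-t)) *\<^sub>R (\<Phi> s - \<Phi> t)) ** \<Psi> t) = (1/(s-t)) *\<^sub>R (\<Psi> s - \<Psi> t)"
  proof (rule eventually_at_filter[THEN iffD2], intro always_eventually allI impI)
    fix s assume s: "s \<in> {0..T}"
    have a: "\<Psi> s ** \<Phi> s ** \<Psi> t = \<Psi> t" using psi_l[OF s] by simp
    have b: "\<Psi> s ** \<Phi> t ** \<Psi> t = \<Psi> s" using psi_r[OF t] by (simp add: matrix_mul_assoc[symmetric])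
    have "\<Psi> s ** (\<Phi> s - \<Phi> t) ** \<Psi> t = \<Psi> t - \<Psi> s"
      by (simp only: mm_diff_r mm_diff_l a b)
    moreover have "\<Psi> s ** (r *\<^sub>R X) ** \<Psi> t = r *\<^sub>R (\<Psi> s ** X ** \<Psi> t)" for r X
      by (simp only: mm_scaleR_r mm_scaleR_l)
    ultimately have "- (\<Psi> s ** ((1/(s-t)) *\<^sub>R (\<Phi> s - \<Phi> t)) ** \<Psi> t) = - ((1/(s-t)) *\<^sub>R (\<Psi> t - \<Psi> s))"
      by (simp only:)
    then show "- (\<Psi> s ** ((1/(s-t)) *\<^sub>R (\<Phi> s - \<Phi> t)) ** \<Psi> t) = (1/(s-t)) *\<^sub>R (\<Psi> s - \<Psi> t)"
      by (simp add: scaleR_diff_right)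
  qed
  show "((\<lambda>s. (1/(s-t)) *\<^sub>R (\<Psi> s - \<Psi> t)) \<longlongrightarrow> - (\<Psi> t ** B t)) (at t within {0..T})"
    using Lim_transform_eventually[OF l ev] unfolding e1 .
qed

lemma psi_cont: "continuous_on {0..T} \<Psi>"
  using psi_tendsto by (simp add: continuous_on_def)

end



lemma int_split_deriv:
  fixes F :: "real \<Rightarrow> 'a::banach"
  assumes cF: "continuous_on {0..S} F" and iF: "F integrable_on {S..T}" and "0 \<le> S" "S \<le> T" and t: "t \<in> {0..S}"
  shows "((\<lambda>u. integral {u..T} F + C) has_vector_derivative - F t) (at t within {0..S})"
proof -
  have eq: "integral {u..T} F + C = integral {u..S} F + (integral {S..T} F + C)" if u: "u \<in> {0..S}" for u
  proof -
    have "F integrable_on {u..S}"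
      by (rule integrable_subinterval_real[OF integrable_continuous_interval[OF cF]]) (use u in auto)
    then have "F integrable_on {u..T}"
      using Henstock_Kurzweil_Integration.integrable_combine[where a=u and c=S and b=T and f=F] u assms by auto
    then have "integral {u..S} F + integral {S..T} F = integral {u..T} F"
      using Henstock_Kurzweil_Integration.integral_combine[where a=u and c=S and b=T and f=F] u assms by auto
    then show ?thesis by (simp add: algebra_simps)
  qed
  have d: "((\<lambda>u. integral {u..S} F + (integral {S..T} F + C)) has_vector_derivative - F t + 0) (at t within {0..S})"
    by (rule has_vector_derivative_add[OF integral_has_vector_derivative'[OF cF t] has_vector_derivative_const])
  show ?thesis
    by (rule has_vector_derivative_transform[OF t eq]) (use d in simp_all)
qed

lemma rlim:
  fixes f :: "real \<Rightarrow> 'a::real_normed_vector"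
  assumes "(f has_vector_derivative f') (at S within {0..T})" "0 < S" "S < T"
  shows "(f \<longlongrightarrow> f S) (at_right S)"
proof -
  have "continuous (at S within {0..T}) f" by (rule has_vector_derivative_continuous[OF assms(1)])
  then have "(f \<longlongrightarrow> f S) (at S)" using at_within_Icc_at[OF assms(2,3)] by (simp add: continuous_within)
  then show ?thesis by (rule tendsto_mono[OF at_le[OF subset_UNIV], rotated])
qed

lemma vs_neg: "vstack (-P) 0 + vstack 0 (-Q) = - vstack (P::real^'c^'m) (Q::real^'c^'n)"
  by (auto simp: vstack_def vec_eq_iff split: sum.splits)

context phictx begin

lemma ltil_deriv:
  assumes t: "t \<in> {0..T}"
  shows "((\<lambda>t. L ** (\<Phi> u ** \<Psi> t)) has_vector_derivative - (L ** (\<Phi> u ** \<Psi> t) ** B t)) (at t within {0..T})"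
proof -
  have "((\<lambda>t. (L ** \<Phi> u) ** \<Psi> t) has_vector_derivative (L ** \<Phi> u) ** (- (\<Psi> t ** B t))) (at t within {0..T})"
    by (rule bounded_linear.has_vector_derivative[OF bounded_bilinear.bounded_linear_right[OF bb_mm] psi_deriv[OF t]])
  then show ?thesis by (simp add: matrix_mul_assoc mm_uminus_r)
qed

lemma ltil_cont: "continuous_on {0..T} (\<lambda>t. L ** (\<Phi> u ** \<Psi> t))"
proof -
  have "continuous_on {0..T} (\<lambda>t. (L ** \<Phi> u) ** \<Psi> t)"
    by (rule bounded_linear.continuous_on[OF bounded_bilinear.bounded_linear_right[OF bb_mm] psi_cont])
  then show ?thesis by (simp add: matrix_mul_assoc)
qed

lemma LT_eq: "Ltil_T L \<Phi> T t = L ** (\<Phi> T ** \<Psi> t)"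
  by (simp add: Ltil_T_def trans_mat_def \<Psi>_def)

end



theorem lemma1:
  fixes S T :: real
    and \<beta> :: "real \<Rightarrow> real^'d"
    and B :: "real \<Rightarrow> real^'d^'d"
    and \<sigma> :: "real \<Rightarrow> real^'d'^'d"
    and a :: "real \<Rightarrow> real^'d^'d"
    and \<Phi> :: "real \<Rightarrow> real^'d^'d"
    and LmS :: "real^'d^'mS" and LmT :: "real^'d^'mT"
    and \<Sigma>S :: "real^'mS^'mS" and \<Sigma>T :: "real^'mT^'mT"
  assumes "0 < S" and "S < T"
    and "continuous_on {0..T} \<beta>" and "continuous_on {0..T} B" and "continuous_on {0..T} \<sigma>"
    and a_def: "\<And>t. a t = \<sigma> t ** transpose (\<sigma> t)"
    and "sym_posdef \<Sigma>S" and "sym_posdef \<Sigma>T"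
    and Phi_ode: "\<And>t. t \<in> {0..T} \<Longrightarrow> (\<Phi> has_vector_derivative (B t ** \<Phi> t)) (at t within {0..T})"
    and Phi0: "\<Phi> 0 = mat 1"
  shows
    "(\<forall>t\<in>{S<..T}.
        (Ltil_T LmT \<Phi> T has_vector_derivative - (Ltil_T LmT \<Phi> T t ** B t)) (at t within {S<..T})
      \<and> (Mdag_T LmT \<Phi> a \<Sigma>T T has_vector_derivative
           - (Ltil_T LmT \<Phi> T t ** a t ** transpose (Ltil_T LmT \<Phi> T t))) (at t within {S<..T})
      \<and> (mu_T LmT \<Phi> \<beta> T has_vector_derivative - (Ltil_T LmT \<Phi> T t *v \<beta> t)) (at t within {S<..T}))
   \<and> Ltil_T LmT \<Phi> T T = LmT \<and> Mdag_T LmT \<Phi> a \<Sigma>T T T = \<Sigma>T \<and> mu_T LmT \<Phi> \<beta> T T = 0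
   \<and> (\<forall>t\<in>{0..S}.
        (Ltil_S LmS LmT \<Phi> S T has_vector_derivative - (Ltil_S LmS LmT \<Phi> S T t ** B t)) (at t within {0..S})
      \<and> (Mdag_S LmS LmT \<Phi> a \<Sigma>S \<Sigma>T S T has_vector_derivative
           - (Ltil_S LmS LmT \<Phi> S T t ** a t ** transpose (Ltil_S LmS LmT \<Phi> S T t))) (at t within {0..S})
      \<and> (mu_S LmS LmT \<Phi> \<beta> S T has_vector_derivative - (Ltil_S LmS LmT \<Phi> S T t *v \<beta> t)) (at t within {0..S}))
   \<and> (\<exists>L M m.
        (Ltil_T LmT \<Phi> T \<longlongrightarrow> L) (at_right S)
      \<and> (Mdag_T LmT \<Phi> a \<Sigma>T T \<longlongrightarrow> M) (at_right S)
      \<and> (mu_T LmT \<Phi> \<beta> T \<longlongrightarrow> m) (at_right S)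
      \<and> Ltil_S LmS LmT \<Phi> S T S = vstack LmS L
      \<and> Mdag_S LmS LmT \<Phi> a \<Sigma>S \<Sigma>T S T S = blockdiag \<Sigma>S M
      \<and> mu_S LmS LmT \<Phi> \<beta> S T S = vstack_vec 0 m)"
proof -
  note S0 = assms(1) and ST = assms(2) and cbeta = assms(3) and cB = assms(4) and csig = assms(5)
  have T0: "0 \<le> T" using S0 ST by simp
  obtain c where c: "c > 0" "\<forall>t\<in>{0..T}. \<forall>x. c * norm x \<le> norm (\<Phi> t *v x)"
    using phi_lower[OF cB Phi_ode Phi0 T0] by blast
  interpret P: phictx \<Phi> B T c
    by unfold_locales (use c Phi_ode in auto)
  have LT_fun: "Ltil_T LmT \<Phi> T = (\<lambda>t. LmT ** (\<Phi> T ** P.\<Psi> t))"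
    by (rule ext) (rule P.LT_eq)
  have dLT: "(Ltil_T LmT \<Phi> T has_vector_derivative - (Ltil_T LmT \<Phi> T t ** B t)) (at t within {0..T})"
    if t: "t \<in> {0..T}" for t
    unfolding LT_fun by (rule P.ltil_deriv[OF t])
  have cLT: "continuous_on {0..T} (Ltil_T LmT \<Phi> T)"
    unfolding LT_fun by (rule P.ltil_cont)
  have a_fun: "a = (\<lambda>t. \<sigma> t ** transpose (\<sigma> t))" by (rule ext) (rule a_def)
  have ca: "continuous_on {0..T} a"
    unfolding a_fun
    by (rule bounded_bilinear.continuous_on[OF bb_mm csig bounded_linear.continuous_on[OF bl_transpose csig]])
  define FT where "FT \<tau> = Ltil_T LmT \<Phi> T \<tau> ** a \<tau> ** transpose (Ltil_T LmT \<Phi> T \<tau>)" for \<tau>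
  define FmT where "FmT \<tau> = Ltil_T LmT \<Phi> T \<tau> *v \<beta> \<tau>" for \<tau>
  have cFT: "continuous_on {0..T} FT"
    unfolding FT_def
    by (intro bounded_bilinear.continuous_on[OF bb_mm] bounded_linear.continuous_on[OF bl_transpose] cLT ca)
  have cFmT: "continuous_on {0..T} FmT"
    unfolding FmT_def
    by (intro bounded_bilinear.continuous_on[OF bb_mv] cLT cbeta)
  have MT_fun: "Mdag_T LmT \<Phi> a \<Sigma>T T = (\<lambda>t. integral {t..T} FT + \<Sigma>T)"
    by (rule ext) (simp add: Mdag_T_def FT_def[abs_def])
  have muT_fun: "mu_T LmT \<Phi> \<beta> T = (\<lambda>t. integral {t..T} FmT)"
    by (rule ext) (simp add: mu_T_def FmT_def[abs_def])
  have dMT: "(Mdag_T LmT \<Phi> a \<Sigma>T T has_vector_derivative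
           - (Ltil_T LmT \<Phi> T t ** a t ** transpose (Ltil_T LmT \<Phi> T t))) (at t within {0..T})"
    if t: "t \<in> {0..T}" for t
    unfolding MT_fun
    using has_vector_derivative_add[OF integral_has_vector_derivative'[OF cFT t] has_vector_derivative_const]
    by (simp add: FT_def)
  have dmuT: "(mu_T LmT \<Phi> \<beta> T has_vector_derivative - (Ltil_T LmT \<Phi> T t *v \<beta> t)) (at t within {0..T})"
    if t: "t \<in> {0..T}" for t
    unfolding muT_fun
    using integral_has_vector_derivative'[OF cFmT t]
    by (simp add: FmT_def)
  have sub1: "{S<..T} \<subseteq> {0..T}" using S0 by auto
  have part1: "\<forall>t\<in>{S<..T}.
        (Ltil_T LmT \<Phi> T has_vector_derivative - (Ltil_T LmT \<Phi> T t ** B t)) (at t within {S<..T})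
      \<and> (Mdag_T LmT \<Phi> a \<Sigma>T T has_vector_derivative
           - (Ltil_T LmT \<Phi> T t ** a t ** transpose (Ltil_T LmT \<Phi> T t))) (at t within {S<..T})
      \<and> (mu_T LmT \<Phi> \<beta> T has_vector_derivative - (Ltil_T LmT \<Phi> T t *v \<beta> t)) (at t within {S<..T})"
  proof
    fix t assume "t \<in> {S<..T}"
    then have t: "t \<in> {0..T}" using sub1 by auto
    show "(Ltil_T LmT \<Phi> T has_vector_derivative - (Ltil_T LmT \<Phi> T t ** B t)) (at t within {S<..T})
      \<and> (Mdag_T LmT \<Phi> a \<Sigma>T T has_vector_derivative
           - (Ltil_T LmT \<Phi> T t ** a t ** transpose (Ltil_T LmT \<Phi> T t))) (at t within {S<..T})
      \<and> (mu_T LmT \<Phi> \<beta> T has_vector_derivative - (Ltil_T LmT \<Phi> T t *v \<beta> t)) (at t within {S<..T})"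
      using has_vector_derivative_within_subset[OF dLT[OF t] sub1]
        has_vector_derivative_within_subset[OF dMT[OF t] sub1]
        has_vector_derivative_within_subset[OF dmuT[OF t] sub1] by blast
  qed
  have TT: "T \<in> {0..T}" using T0 by simp
  have part2: "Ltil_T LmT \<Phi> T T = LmT \<and> Mdag_T LmT \<Phi> a \<Sigma>T T T = \<Sigma>T \<and> mu_T LmT \<Phi> \<beta> T T = 0"
    using P.psi_r[OF TT] by (simp add: P.LT_eq MT_fun muT_fun)
  define GS where "GS t = vstack (LmS ** (\<Phi> S ** P.\<Psi> t)) (LmT ** (\<Phi> T ** P.\<Psi> t))" for t
  have LS_eq: "Ltil_S LmS LmT \<Phi> S T t = GS t" if "t \<in> {0..S}" for t
    using that by (simp add: Ltil_S_def GS_def trans_mat_def P.\<Psi>_def P.LT_eq[unfolded P.\<Psi>_def])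
  have LS_eq2: "Ltil_S LmS LmT \<Phi> S T t = vstack 0 (Ltil_T LmT \<Phi> T t)" if "t \<in> {S<..T}" for t
    using that by (simp add: Ltil_S_def)
  have GS_fun: "GS = (\<lambda>t. vstack (LmS ** (\<Phi> S ** P.\<Psi> t)) 0 + vstack 0 (LmT ** (\<Phi> T ** P.\<Psi> t)))"
    unfolding GS_def by (rule ext) (rule vstack_split)
  have dGS: "(GS has_vector_derivative - (GS t ** B t)) (at t within {0..T})" if t: "t \<in> {0..T}" for t
  proof -
    have "(GS has_vector_derivative vstack (- (LmS ** (\<Phi> S ** P.\<Psi> t) ** B t)) 0 + vstack 0 (- (LmT ** (\<Phi> T ** P.\<Psi> t) ** B t))) (at t within {0..T})"
      unfolding GS_fun
      by (rule has_vector_derivative_add[OF bounded_linear.has_vector_derivative[OF bl_vstack1 P.ltil_deriv[OF t]]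
            bounded_linear.has_vector_derivative[OF bl_vstack2 P.ltil_deriv[OF t]]])
    then show ?thesis by (simp add: vs_neg GS_def vstack_mult)
  qed
  have cGS: "continuous_on {0..T} GS"
    unfolding GS_fun
    by (intro continuous_on_add bounded_linear.continuous_on[OF bl_vstack1] bounded_linear.continuous_on[OF bl_vstack2] P.ltil_cont)
  have sub2: "{0..S} \<subseteq> {0..T}" using ST by auto
  define FS where "FS \<tau> = Ltil_S LmS LmT \<Phi> S T \<tau> ** a \<tau> ** transpose (Ltil_S LmS LmT \<Phi> S T \<tau>)" for \<tau>
  define FmS where "FmS \<tau> = Ltil_S LmS LmT \<Phi> S T \<tau> *v \<beta> \<tau>" for \<tau>
  have cFS: "continuous_on {0..S} FS"
  proof (rule continuous_on_eq)
    show "continuous_on {0..S} (\<lambda>\<tau>. GS \<tau> ** a \<tau> ** transpose (GS \<tau>))"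
      by (rule continuous_on_subset[OF _ sub2])
        (intro bounded_bilinear.continuous_on[OF bb_mm] bounded_linear.continuous_on[OF bl_transpose] cGS ca)
    show "\<And>x. x \<in> {0..S} \<Longrightarrow> GS x ** a x ** transpose (GS x) = FS x"
      by (simp add: FS_def LS_eq)
  qed
  have cFmS: "continuous_on {0..S} FmS"
  proof (rule continuous_on_eq)
    show "continuous_on {0..S} (\<lambda>\<tau>. GS \<tau> *v \<beta> \<tau>)"
      by (rule continuous_on_subset[OF _ sub2])
        (intro bounded_bilinear.continuous_on[OF bb_mv] cGS cbeta)
    show "\<And>x. x \<in> {0..S} \<Longrightarrow> GS x *v \<beta> x = FmS x"
      by (simp add: FmS_def LS_eq)
  qed
  have sub3: "{S..T} \<subseteq> {0..T}" using S0 by auto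
  have FS_eq: "FS x = blockdiag 0 (FT x)" if "x \<in> {S..T} - {S}" for x
    using that LS_eq2[of x] by (simp add: FS_def FT_def vstack0_blockdiag)
  have FmS_eq: "FmS x = vstack_vec 0 (FmT x)" if "x \<in> {S..T} - {S}" for x
    using that LS_eq2[of x] by (simp add: FmS_def FmT_def vstack_mv)
  have iFT: "FT integrable_on {S..T}"
    by (rule integrable_continuous_interval[OF continuous_on_subset[OF cFT sub3]])
  have iFmT: "FmT integrable_on {S..T}"
    by (rule integrable_continuous_interval[OF continuous_on_subset[OF cFmT sub3]])
  have iFT': "(\<lambda>x. blockdiag 0 (FT x)) integrable_on {S..T}"
    by (rule integrable_continuous_interval[OF bounded_linear.continuous_on[OF bl_blockdiag2 continuous_on_subset[OF cFT sub3]]])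
  have iFmT': "(\<lambda>x. vstack_vec 0 (FmT x)) integrable_on {S..T}"
    by (rule integrable_continuous_interval[OF bounded_linear.continuous_on[OF bl_vstack_vec2 continuous_on_subset[OF cFmT sub3]]])
  have iFS: "FS integrable_on {S..T}"
    by (rule integrable_spike_finite[of "{S}", OF _ FS_eq iFT']) auto
  have iFmS: "FmS integrable_on {S..T}"
    by (rule integrable_spike_finite[of "{S}", OF _ FmS_eq iFmT']) auto
  have MS_fun: "Mdag_S LmS LmT \<Phi> a \<Sigma>S \<Sigma>T S T = (\<lambda>t. integral {t..T} FS + blockdiag \<Sigma>S \<Sigma>T)"
    by (rule ext) (simp add: Mdag_S_def FS_def[abs_def])
  have muS_fun: "mu_S LmS LmT \<Phi> \<beta> S T = (\<lambda>t. integral {t..T} FmS + 0)"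
    by (rule ext) (simp add: mu_S_def FmS_def[abs_def])
  have S0': "0 \<le> S" "S \<le> T" using S0 ST by auto
  have part3: "\<forall>t\<in>{0..S}.
        (Ltil_S LmS LmT \<Phi> S T has_vector_derivative - (Ltil_S LmS LmT \<Phi> S T t ** B t)) (at t within {0..S})
      \<and> (Mdag_S LmS LmT \<Phi> a \<Sigma>S \<Sigma>T S T has_vector_derivative
           - (Ltil_S LmS LmT \<Phi> S T t ** a t ** transpose (Ltil_S LmS LmT \<Phi> S T t))) (at t within {0..S})
      \<and> (mu_S LmS LmT \<Phi> \<beta> S T has_vector_derivative - (Ltil_S LmS LmT \<Phi> S T t *v \<beta> t)) (at t within {0..S})"
  proof
    fix t assume t: "t \<in> {0..S}"
    have tT: "t \<in> {0..T}" using t sub2 by auto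
    have d1: "(Ltil_S LmS LmT \<Phi> S T has_vector_derivative - (GS t ** B t)) (at t within {0..S})"
      by (rule has_vector_derivative_transform[OF t LS_eq has_vector_derivative_within_subset[OF dGS[OF tT] sub2]])
    have d2: "(Mdag_S LmS LmT \<Phi> a \<Sigma>S \<Sigma>T S T has_vector_derivative - FS t) (at t within {0..S})"
      unfolding MS_fun by (rule int_split_deriv[OF cFS iFS S0' t])
    have d3: "(mu_S LmS LmT \<Phi> \<beta> S T has_vector_derivative - FmS t) (at t within {0..S})"
      unfolding muS_fun by (rule int_split_deriv[OF cFmS iFmS S0' t])
    show "(Ltil_S LmS LmT \<Phi> S T has_vector_derivative - (Ltil_S LmS LmT \<Phi> S T t ** B t)) (at t within {0..S})
      \<and> (Mdag_S LmS LmT \<Phi> a \<Sigma>S \<Sigma>T S T has_vector_derivative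
           - (Ltil_S LmS LmT \<Phi> S T t ** a t ** transpose (Ltil_S LmS LmT \<Phi> S T t))) (at t within {0..S})
      \<and> (mu_S LmS LmT \<Phi> \<beta> S T has_vector_derivative - (Ltil_S LmS LmT \<Phi> S T t *v \<beta> t)) (at t within {0..S})"
      using d1 d2 d3 LS_eq[OF t] by (simp add: FS_def FmS_def)
  qed
  have SI: "S \<in> {0..T}" "S \<in> {0..S}" using S0' by auto
  have lim1: "(Ltil_T LmT \<Phi> T \<longlongrightarrow> Ltil_T LmT \<Phi> T S) (at_right S)"
    by (rule rlim[OF dLT[OF SI(1)] S0 ST])
  have lim2: "(Mdag_T LmT \<Phi> a \<Sigma>T T \<longlongrightarrow> Mdag_T LmT \<Phi> a \<Sigma>T T S) (at_right S)"
    by (rule rlim[OF dMT[OF SI(1)] S0 ST])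
  have lim3: "(mu_T LmT \<Phi> \<beta> T \<longlongrightarrow> mu_T LmT \<Phi> \<beta> T S) (at_right S)"
    by (rule rlim[OF dmuT[OF SI(1)] S0 ST])
  have v1: "Ltil_S LmS LmT \<Phi> S T S = vstack LmS (Ltil_T LmT \<Phi> T S)"
    using LS_eq[OF SI(2)] P.psi_r[OF SI(1)] by (simp add: GS_def P.LT_eq)
  have intFS: "integral {S..T} FS = blockdiag 0 (integral {S..T} FT)"
  proof -
    have "integral {S..T} FS = integral {S..T} (\<lambda>x. blockdiag 0 (FT x))"
      by (rule integral_spike[of "{S}"]) (auto simp: FS_eq)
    also have "\<dots> = integral {S..T} ((\<lambda>B. blockdiag 0 B) \<circ> FT)" by (simp add: o_def)
    also have "\<dots> = blockdiag 0 (integral {S..T} FT)"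
      by (rule integral_linear[OF iFT bl_blockdiag2])
    finally show ?thesis .
  qed
  have intFmS: "integral {S..T} FmS = vstack_vec 0 (integral {S..T} FmT)"
  proof -
    have "integral {S..T} FmS = integral {S..T} (\<lambda>x. vstack_vec 0 (FmT x))"
      by (rule integral_spike[of "{S}"]) (auto simp: FmS_eq)
    also have "\<dots> = integral {S..T} ((\<lambda>y. vstack_vec 0 y) \<circ> FmT)" by (simp add: o_def)
    also have "\<dots> = vstack_vec 0 (integral {S..T} FmT)"
      by (rule integral_linear[OF iFmT bl_vstack_vec2])
    finally show ?thesis .
  qed
  have v2: "Mdag_S LmS LmT \<Phi> a \<Sigma>S \<Sigma>T S T S = blockdiag \<Sigma>S (Mdag_T LmT \<Phi> a \<Sigma>T T S)"
    by (simp add: MS_fun MT_fun intFS blockdiag_add)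
  have v3: "mu_S LmS LmT \<Phi> \<beta> S T S = vstack_vec 0 (mu_T LmT \<Phi> \<beta> T S)"
    by (simp add: muS_fun muT_fun intFmS)
  show ?thesis
    using part1 part2 part3 lim1 lim2 lim3 v1 v2 v3 by blast
qed


end
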